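(* Let $n\ge3$, $\delta\in(0,1/2)$ and $A>0$. Let $\{S_i\}$ be a finite collection of spheres in $\mathbb{R}^n$ with radii in a fixed compact interval $[c^{-1},c]$ ($c\ge1$), such that \[ \#\{i: S_i\in B_\rho\}\le A\rho \] for every ball $B_\rho\subset\mathbb{R}^{n+1}$ of radius $\rho\ge\delta$. Then for all $a_i\in[0,\infty)$, \[ \Big\|\sum_i a_i1_{S_i^\delta}\Big\|_{L^2(\mathbb{R}^n)}\le C\,\delta\log(\delta^{-1})\,A^{1/2}\Big(\sum_i a_i^2\Big)^{1/2}, \] with $C$ depending only on $n$ and $c$.
   Context: A sphere $S(x,t)=\{y\in\mathbb{R}^n:|y-x|=t\}$ is identified with the point $(x,t)\in\mathbb{R}^{n+1}$, so "$S_i\in B_\rho$" means the point $(x_i,t_i)$ lies in $B_\rho$. $S^\delta$ denotes the $\delta$-neighborhood of $S$ in $\mathbb{R}^n$. *)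

theory Defs
  imports "HOL-Analysis.Analysis"
begin

definition nbhd :: "'a::metric_space set \<Rightarrow> real \<Rightarrow> 'a set" where
  "nbhd S \<delta> = {y. \<exists>z\<in>S. dist y z < \<delta>}"

end

theory Submission
  imports Defs "HOL-Analysis.Analysis"
begin
lemma pow_diff_le:
  fixes x y :: real
  assumes "0 \<le> y" "y \<le> x"
  shows "x ^ Suc m - y ^ Suc m \<le> real (Suc m) * x ^ m * (x - y)"
proof (induction m)
  case 0 then show ?case by simp
next
  case (Suc m)
  have "x ^ Suc (Suc m) - y ^ Suc (Suc m) = x * (x ^ Suc m - y ^ Suc m) + y ^ Suc m * (x - y)"
    by (simp add: algebra_simps)
  also have "\<dots> \<le> x * (real (Suc m) * x ^ m * (x - y)) + x ^ Suc m * (x - y)"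
    using assms Suc by (intro add_mono mult_left_mono mult_right_mono power_mono) auto
  also have "\<dots> = real (Suc (Suc m)) * x ^ Suc m * (x - y)" by (simp add: algebra_simps)
  finally show ?case .
qed

lemma pow_diff_le2:
  fixes x y :: real
  assumes "0 \<le> y" "y \<le> x" "2 \<le> m"
  shows "x ^ m - y ^ m \<le> real m * x ^ (m - 2) * (x\<^sup>2 - y\<^sup>2)"
proof -
  obtain k where m: "m = Suc (Suc k)" using assms(3) by (metis add_2_eq_Suc le_Suc_ex)
  have "x ^ m - y ^ m \<le> real m * x ^ Suc k * (x - y)"
    using pow_diff_le[OF assms(1,2), of "Suc k"] m by simp
  also have "\<dots> = real m * x ^ k * (x * (x - y))" by (simp add: algebra_simps)
  also have "\<dots> \<le> real m * x ^ k * ((x + y) * (x - y))"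
    using assms by (intro mult_left_mono mult_right_mono) auto
  also have "\<dots> = real m * x ^ (m - 2) * (x\<^sup>2 - y\<^sup>2)" by (simp add: m power2_eq_square algebra_simps)
  finally show ?thesis .
qed

lemma inner_ball_bound:
  fixes A :: "'i set" and z R1 R2 :: real
  assumes A: "finite A" "2 \<le> card A" and R: "0 \<le> R1" "R1 \<le> R2"
  shows "emeasure (Pi\<^sub>M A (\<lambda>_. lborel))
     ({g. R1\<^sup>2 < z\<^sup>2 + (\<Sum>i\<in>A. (g i)\<^sup>2) \<and> z\<^sup>2 + (\<Sum>i\<in>A. (g i)\<^sup>2) < R2\<^sup>2} \<inter> space (Pi\<^sub>M A (\<lambda>_. lborel)))
     \<le> ennreal (unit_ball_vol (real (card A)) * real (card A) * R2 ^ (card A - 2) * (R2\<^sup>2 - R1\<^sup>2))"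
    (is "emeasure ?M (?S \<inter> _) \<le> ennreal ?K")
proof -
  let ?m = "card A"
  let ?B = "\<lambda>r. {f. sqrt (\<Sum>i\<in>A. (f i)\<^sup>2) \<le> r} \<inter> space ?M"
  have sq: "0 \<le> (\<Sum>i\<in>A. (g i)\<^sup>2)" for g :: "'i \<Rightarrow> real" by (simp add: sum_nonneg)
  have Bs: "?B r \<in> sets ?M" for r by measurable
  have om: "0 \<le> unit_ball_vol (real (card A))" by simp
  show ?thesis
  proof (cases "R2\<^sup>2 - z\<^sup>2 \<le> 0")
    case True
    have "?S = {}"
    proof (intro equalityI subsetI)
      fix g assume "g \<in> ?S"
      then show "g \<in> {}" using True sq[of g] by simp
    qed simp
    then show ?thesis by (metis Int_empty_left emeasure_empty zero_le)
  next
    case False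
    define \<rho>2 where "\<rho>2 = sqrt (R2\<^sup>2 - z\<^sup>2)"
    have r2: "0 < \<rho>2" "\<rho>2\<^sup>2 = R2\<^sup>2 - z\<^sup>2" using False by (auto simp: \<rho>2_def)
    have zR2: "z\<^sup>2 \<le> R2\<^sup>2" using False by simp
    have "\<rho>2 \<le> sqrt (R2\<^sup>2)" unfolding \<rho>2_def by (intro real_sqrt_le_mono) simp
    then have r2le: "\<rho>2 \<le> R2" using R by simp
    have sub2: "?S \<inter> space ?M \<subseteq> ?B \<rho>2"
      using r2 by (auto simp: real_sqrt_le_iff' sq)
    have m2: "emeasure ?M (?B \<rho>2) = ennreal (unit_ball_vol (real ?m) * \<rho>2 ^ ?m)"
      using emeasure_cball_aux[OF A(1) r2(1)] .
    show ?thesis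
    proof (cases "R1\<^sup>2 - z\<^sup>2 \<le> 0")
      case True
      have "emeasure ?M (?S \<inter> space ?M) \<le> emeasure ?M (?B \<rho>2)"
        by (intro emeasure_mono sub2 Bs)
      also have "\<dots> = ennreal (unit_ball_vol (real ?m) * \<rho>2 ^ ?m)" by (rule m2)
      also have "\<dots> \<le> ennreal ?K"
      proof (intro ennreal_leI)
        have "\<rho>2 ^ ?m = \<rho>2 ^ (?m - 2) * \<rho>2\<^sup>2"
          using A(2) by (metis le_add_diff_inverse2 power_add)
        also have "\<dots> \<le> R2 ^ (?m - 2) * (R2\<^sup>2 - R1\<^sup>2)"
          using r2 r2le True zR2 by (intro mult_mono power_mono) auto
        also have "\<dots> \<le> real ?m * R2 ^ (?m - 2) * (R2\<^sup>2 - R1\<^sup>2)"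
        proof -
          have nn: "0 \<le> R2 ^ (?m - 2) * (R2\<^sup>2 - R1\<^sup>2)"
            using R by (intro mult_nonneg_nonneg zero_le_power) (auto intro: power_mono)
          have "1 * (R2 ^ (?m - 2) * (R2\<^sup>2 - R1\<^sup>2)) \<le> real ?m * (R2 ^ (?m - 2) * (R2\<^sup>2 - R1\<^sup>2))"
            using A(2) nn by (intro mult_right_mono) auto
          then show ?thesis by (simp add: mult.assoc)
        qed
        finally show "unit_ball_vol (real ?m) * \<rho>2 ^ ?m \<le> ?K"
          using om by (simp add: mult.assoc mult_left_mono)
      qed
      finally show ?thesis .
    next
      case False
      define \<rho>1 where "\<rho>1 = sqrt (R1\<^sup>2 - z\<^sup>2)"
      have r1: "0 < \<rho>1" "\<rho>1\<^sup>2 = R1\<^sup>2 - z\<^sup>2" using False by (auto simp: \<rho>1_def)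
      have r12: "\<rho>1 \<le> \<rho>2" unfolding \<rho>1_def \<rho>2_def using R
        by (intro real_sqrt_le_mono) (simp add: power_mono)
      have sub: "?S \<inter> space ?M \<subseteq> ?B \<rho>2 - ?B \<rho>1"
        using sub2 r1 by (auto simp: real_sqrt_le_iff' sq)
      have m1: "emeasure ?M (?B \<rho>1) = ennreal (unit_ball_vol (real ?m) * \<rho>1 ^ ?m)"
        using emeasure_cball_aux[OF A(1) r1(1)] .
      have B12: "?B \<rho>1 \<subseteq> ?B \<rho>2" using r12 by auto
      have "emeasure ?M (?S \<inter> space ?M) \<le> emeasure ?M (?B \<rho>2 - ?B \<rho>1)"
        by (intro emeasure_mono sub) (intro sets.Diff Bs)
      also have "\<dots> = emeasure ?M (?B \<rho>2) - emeasure ?M (?B \<rho>1)"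
        using B12 m1 by (intro emeasure_Diff Bs) auto
      also have "\<dots> = ennreal (unit_ball_vol (real ?m) * \<rho>2 ^ ?m - unit_ball_vol (real ?m) * \<rho>1 ^ ?m)"
        unfolding m1 m2
        by (rule ennreal_minus) (use r1 om in simp)
      also have "\<dots> \<le> ennreal ?K"
      proof (intro ennreal_leI)
        have "\<rho>2 ^ ?m - \<rho>1 ^ ?m \<le> real ?m * \<rho>2 ^ (?m - 2) * (\<rho>2\<^sup>2 - \<rho>1\<^sup>2)"
          using pow_diff_le2[of \<rho>1 \<rho>2 ?m] r1 r12 A(2) by simp
        also have "\<dots> \<le> real ?m * R2 ^ (?m - 2) * (R2\<^sup>2 - R1\<^sup>2)"
        proof -
          have eq: "\<rho>2\<^sup>2 - \<rho>1\<^sup>2 = R2\<^sup>2 - R1\<^sup>2" using r1 r2 by simp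
          have X: "0 \<le> R2\<^sup>2 - R1\<^sup>2" using R by (simp add: power_mono)
          show ?thesis unfolding eq using r2 r2le X
            by (intro mult_right_mono mult_left_mono power_mono) auto
        qed
        finally show "unit_ball_vol (real ?m) * \<rho>2 ^ ?m - unit_ball_vol (real ?m) * \<rho>1 ^ ?m \<le> ?K"
          using om by (simp add: right_diff_distrib[symmetric] mult.assoc mult_left_mono)
      qed
      finally show ?thesis .
    qed
  qed
qed

lemma slab_coord:
  fixes b :: "'a::euclidean_space"
  assumes b: "b \<in> Basis" and dim: "3 \<le> DIM('a)" and R: "0 \<le> R1" "R1 \<le> R2" and w: "0 \<le> w"
  shows "emeasure lborel {y::'a. R1 < norm y \<and> norm y < R2 \<and> t \<le> y \<bullet> b \<and> y \<bullet> b \<le> t + w}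
     \<le> ennreal (unit_ball_vol (real (DIM('a) - 1)) * real (DIM('a) - 1) * R2 ^ (DIM('a) - 3) * (R2\<^sup>2 - R1\<^sup>2) * w)"
proof -
  define A where "A = Basis - {b}"
  have A: "finite A" "b \<notin> A" "Basis = insert b A" "card A = DIM('a) - 1"
    using b by (auto simp: A_def)
  have cA: "2 \<le> card A" using A(4) dim by simp
  let ?K = "unit_ball_vol (real (card A)) * real (card A) * R2 ^ (card A - 2) * (R2\<^sup>2 - R1\<^sup>2)"
  let ?M = "Pi\<^sub>M A (\<lambda>_. lborel :: real measure)"
  let ?M' = "Pi\<^sub>M Basis (\<lambda>_. lborel :: real measure)"
  let ?g = "\<lambda>f. \<Sum>b\<in>Basis. f b *\<^sub>R (b::'a)"
  let ?P = "\<lambda>f. R1\<^sup>2 < (\<Sum>i\<in>Basis. (f i)\<^sup>2) \<and> (\<Sum>i\<in>Basis. (f i)\<^sup>2) < R2\<^sup>2 \<and> t \<le> f b \<and> f b \<le> t + w"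
  interpret product_sigma_finite "\<lambda>_. lborel :: real measure" by standard
  have K0: "0 \<le> ?K" using R cA by (intro mult_nonneg_nonneg) (auto intro!: power_mono)
  have gi: "?g f \<bullet> i = f i" if "i \<in> Basis" for f i
    using that by (simp add: inner_sum_left inner_Basis if_distrib cong: if_cong)
  have ng: "(norm (?g f))\<^sup>2 = (\<Sum>i\<in>Basis. (f i)\<^sup>2)" for f
  proof -
    have "(norm (?g f))\<^sup>2 = ?g f \<bullet> ?g f" by (simp add: power2_norm_eq_inner)
    also have "\<dots> = (\<Sum>i\<in>Basis. (?g f \<bullet> i) * (?g f \<bullet> i))" by (rule euclidean_inner)
    also have "\<dots> = (\<Sum>i\<in>Basis. (f i)\<^sup>2)" by (intro sum.cong) (simp_all add: gi power2_eq_square)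
    finally show ?thesis .
  qed
  have nlt: "(R1 < norm y) = (R1\<^sup>2 < (norm y)\<^sup>2)" "(norm y < R2) = ((norm y)\<^sup>2 < R2\<^sup>2)" for y :: 'a
    using R by (auto intro: power_strict_mono simp: power_less_imp_less_base)
  have meas: "{f. ?P f} \<inter> space ?M' \<in> sets ?M'"
    using b by measurable
  have "emeasure lborel {y::'a. R1 < norm y \<and> norm y < R2 \<and> t \<le> y \<bullet> b \<and> y \<bullet> b \<le> t + w}
      = emeasure (distr ?M' borel ?g) {y::'a. R1 < norm y \<and> norm y < R2 \<and> t \<le> y \<bullet> b \<and> y \<bullet> b \<le> t + w}"
    by (subst lborel_eq) rule
  also have "\<dots> = emeasure ?M' (?g -` {y::'a. R1 < norm y \<and> norm y < R2 \<and> t \<le> y \<bullet> b \<and> y \<bullet> b \<le> t + w} \<inter> space ?M')"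
    by (rule emeasure_distr) measurable
  also have "?g -` {y::'a. R1 < norm y \<and> norm y < R2 \<and> t \<le> y \<bullet> b \<and> y \<bullet> b \<le> t + w} = {f. ?P f}"
    by (auto simp: nlt ng gi b)
  also have "emeasure ?M' ({f. ?P f} \<inter> space ?M') = (\<integral>\<^sup>+ f. indicator ({f. ?P f} \<inter> space ?M') f \<partial>?M')"
    using meas by (rule nn_integral_indicator[symmetric])
  also have "\<dots> = (\<integral>\<^sup>+ y. \<integral>\<^sup>+ x. indicator ({f. ?P f} \<inter> space ?M') (x(b := y)) \<partial>?M \<partial>lborel)"
    unfolding A(3) by (rule product_nn_integral_insert_rev[OF A(1,2)]) (use meas A(3) in simp)
  also have "\<dots> = (\<integral>\<^sup>+ y. indicator {t..t+w} y * emeasure ?M ({x. R1\<^sup>2 < y\<^sup>2 + (\<Sum>i\<in>A. (x i)\<^sup>2) \<and> y\<^sup>2 + (\<Sum>i\<in>A. (x i)\<^sup>2) < R2\<^sup>2} \<inter> space ?M) \<partial>lborel)"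
  proof (intro nn_integral_cong)
    fix y :: real
    have "(\<integral>\<^sup>+ x. indicator ({f. ?P f} \<inter> space ?M') (x(b := y)) \<partial>?M)
       = (\<integral>\<^sup>+ x. indicator {t..t+w} y * indicator ({x. R1\<^sup>2 < y\<^sup>2 + (\<Sum>i\<in>A. (x i)\<^sup>2) \<and> y\<^sup>2 + (\<Sum>i\<in>A. (x i)\<^sup>2) < R2\<^sup>2} \<inter> space ?M) x \<partial>?M)"
    proof (intro nn_integral_cong)
      fix x assume x: "x \<in> space ?M"
      have s: "(\<Sum>i\<in>Basis. ((x(b := y)) i)\<^sup>2) = y\<^sup>2 + (\<Sum>i\<in>A. (x i)\<^sup>2)"
        unfolding A(3) using A(1,2) by (simp add: sum.insert) (intro sum.cong, auto)
      have sp: "x(b := y) \<in> space ?M'"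
        using x unfolding A(3) by (auto simp: space_PiM PiE_def extensional_def)
      show "(indicator ({f. ?P f} \<inter> space ?M') (x(b := y)) :: ennreal) = indicator {t..t+w} y * indicator ({x. R1\<^sup>2 < y\<^sup>2 + (\<Sum>i\<in>A. (x i)\<^sup>2) \<and> y\<^sup>2 + (\<Sum>i\<in>A. (x i)\<^sup>2) < R2\<^sup>2} \<inter> space ?M) x"
        using x sp s by (auto simp: indicator_def)
    qed
    also have "\<dots> = indicator {t..t+w} y * emeasure ?M ({x. R1\<^sup>2 < y\<^sup>2 + (\<Sum>i\<in>A. (x i)\<^sup>2) \<and> y\<^sup>2 + (\<Sum>i\<in>A. (x i)\<^sup>2) < R2\<^sup>2} \<inter> space ?M)"
    proof -
      have mS: "{x. R1\<^sup>2 < y\<^sup>2 + (\<Sum>i\<in>A. (x i)\<^sup>2) \<and> y\<^sup>2 + (\<Sum>i\<in>A. (x i)\<^sup>2) < R2\<^sup>2} \<inter> space ?M \<in> sets ?M"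
        by measurable
      show ?thesis
        using nn_integral_cmult[OF borel_measurable_indicator[OF mS], of "indicator {t..t+w} y"]
          nn_integral_indicator[OF mS] by simp
    qed
    finally show "(\<integral>\<^sup>+ x. indicator ({f. ?P f} \<inter> space ?M') (x(b := y)) \<partial>?M) = \<dots>" .
  qed
  also have "\<dots> \<le> (\<integral>\<^sup>+ y. ennreal ?K * indicator {t..t+w} y \<partial>lborel)"
  proof (intro nn_integral_mono)
    fix y :: real
    show "indicator {t..t+w} y * emeasure ?M ({x. R1\<^sup>2 < y\<^sup>2 + (\<Sum>i\<in>A. (x i)\<^sup>2) \<and> y\<^sup>2 + (\<Sum>i\<in>A. (x i)\<^sup>2) < R2\<^sup>2} \<inter> space ?M) \<le> ennreal ?K * indicator {t..t+w} y"
      using inner_ball_bound[OF A(1) cA R, of y] by (auto simp: indicator_def)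
  qed
  also have "\<dots> = ennreal ?K * ennreal w"
    using w by (subst nn_integral_cmult_indicator) auto
  also have "\<dots> = ennreal (?K * w)" using K0 w by (simp add: ennreal_mult)
  also have "?K * w = unit_ball_vol (real (DIM('a) - 1)) * real (DIM('a) - 1) * R2 ^ (DIM('a) - 3) * (R2\<^sup>2 - R1\<^sup>2) * w"
    using A(4) by (simp add: numeral_3_eq_3)
  finally show ?thesis .
qed

lemma slab_wo:
  fixes x u :: "real^'m::{finite,wellorder}"
  assumes dim: "3 \<le> CARD('m)" and u: "norm u = 1" and R: "0 \<le> R1" "R1 \<le> R2" and w: "0 \<le> w"
  shows "emeasure lborel {y. R1 < dist y x \<and> dist y x < R2 \<and> t \<le> (y - x) \<bullet> u \<and> (y - x) \<bullet> u \<le> t + w}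
     \<le> ennreal (unit_ball_vol (real (CARD('m) - 1)) * real (CARD('m) - 1) * R2 ^ (CARD('m) - 3) * (R2\<^sup>2 - R1\<^sup>2) * w)"
proof -
  obtain k :: 'm where True by metis
  obtain T where T: "orthogonal_transformation T" and Tu: "T (norm u *\<^sub>R axis k (1::real)) = u"
    by (rule rotation_rightward_line[of u k]) blast
  let ?e = "axis k (1::real)"
  have Te: "T ?e = u" using Tu u by simp
  have eB: "?e \<in> Basis" by (simp add: axis_in_Basis_iff)
  define Y where "Y = {z. R1 < norm z \<and> norm z < R2 \<and> t \<le> z \<bullet> ?e \<and> z \<bullet> ?e \<le> t + w}"
  define X where "X = {y. R1 < dist y x \<and> dist y x < R2 \<and> t \<le> (y - x) \<bullet> u \<and> (y - x) \<bullet> u \<le> t + w}"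
  have Tinner: "T a \<bullet> T b = a \<bullet> b" for a b using T by (simp add: orthogonal_transformation_def)
  have Tnorm: "norm (T a) = norm a" for a using T by (simp add: orthogonal_transformation_norm)
  have Tsurj: "surj T" using T by (simp add: orthogonal_transformation_surj)
  have XY: "X = (\<lambda>z. x + z) ` (T ` Y)"
  proof (intro equalityI subsetI)
    fix y assume y: "y \<in> X"
    obtain z where z: "T z = y - x" using Tsurj by (metis surjD)
    have "z \<in> Y" using y z Tnorm[of z] Tinner[of z ?e] Te
      by (auto simp: X_def Y_def dist_norm)
    then show "y \<in> (\<lambda>z. x + z) ` (T ` Y)" using z by (auto intro!: image_eqI[of y _ "y - x"] image_eqI[of "y - x" T z])
  next
    fix y assume "y \<in> (\<lambda>z. x + z) ` (T ` Y)"
    then obtain z where z: "z \<in> Y" "y = x + T z" by auto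
    then show "y \<in> X" using Tnorm[of z] Tinner[of z ?e] Te
      by (auto simp: X_def Y_def dist_norm)
  qed
  have bY: "bounded Y" unfolding Y_def by (rule bounded_subset[of "cball 0 R2"]) auto
  have bX: "bounded X" unfolding X_def by (rule bounded_subset[of "cball x R2"]) (auto simp: dist_commute)
  have sY: "Y \<in> sets lborel" unfolding Y_def by measurable
  have sX: "X \<in> sets lborel" unfolding X_def by measurable
  have lY: "Y \<in> lmeasurable"
    using bY sY by (intro bounded_set_imp_lmeasurable) (auto intro: sets_completionI_sets)
  have "measure lebesgue X = measure lebesgue (T ` Y)"
    unfolding XY by (rule measure_translation)
  also have "\<dots> = measure lebesgue Y" by (rule measure_orthogonal_image[OF T lY])
  finally have mXY: "measure lborel X = measure lborel Y"
    using sX sY by (simp add: measure_completion)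
  have "emeasure lborel X = emeasure lborel Y"
    using mXY emeasure_bounded_finite[OF bX] emeasure_bounded_finite[OF bY]
    by (simp add: emeasure_eq_ennreal_measure)
  also have "\<dots> \<le> ennreal (unit_ball_vol (real (DIM(real^'m::{finite,wellorder}) - 1)) * real (DIM(real^'m::{finite,wellorder}) - 1) * R2 ^ (DIM(real^'m::{finite,wellorder}) - 3) * (R2\<^sup>2 - R1\<^sup>2) * w)"
    unfolding Y_def using slab_coord[OF eB _ R w, of t] dim by simp
  finally show ?thesis unfolding X_def by simp
qed

typedef ('a::finite) idx = "{..<CARD('a)}" by (rule exI[of _ 0]) simp
instantiation idx :: (finite) linorder begin
definition "less_eq_idx (x::'a idx) (y::'a idx) = (Rep_idx x \<le> Rep_idx y)"
definition "less_idx (x::'a idx) (y::'a idx) = (Rep_idx x < Rep_idx y)"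
instance by standard (auto simp: less_eq_idx_def less_idx_def Rep_idx_inject)
end
lemma UNIV_idx: "(UNIV :: 'a::finite idx set) = Abs_idx ` {..<CARD('a)}"
  by (metis type_definition.univ type_definition_idx)
instance idx :: (finite) finite
  by standard (simp add: UNIV_idx)
instance idx :: (finite) wellorder
proof
  fix P :: "'a idx \<Rightarrow> bool" and a :: "'a idx"
  assume H: "\<And>x. (\<And>y. y < x \<Longrightarrow> P y) \<Longrightarrow> P x"
  show "P a"
    by (induct "Rep_idx a" arbitrary: a rule: less_induct) (metis H less_idx_def)
qed
lemma card_idx: "CARD('a idx) = CARD('a::finite)"
proof -
  have "inj_on (Abs_idx :: nat \<Rightarrow> 'a idx) {..<CARD('a)}"
    by (meson Abs_idx_inject inj_onI)
  then show ?thesis by (simp add: UNIV_idx card_image)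
qed

lemma prod_Basis_cart: "(\<Prod>b\<in>Basis. (v::real^'k) \<bullet> b) = (\<Prod>i\<in>UNIV. v $ i)"
proof -
  have B: "(Basis :: (real^'k) set) = (\<lambda>i. axis i 1) ` UNIV"
    by (auto simp: Basis_vec_def)
  have "inj (\<lambda>i::'k. axis i (1::real))" by (auto intro!: injI simp: axis_eq_axis)
  then show ?thesis unfolding B by (simp add: prod.reindex cart_eq_inner_axis)
qed

locale perm_cart =
  fixes \<sigma> :: "'m::finite \<Rightarrow> 'n::finite"
  assumes bij: "bij \<sigma>"
begin

definition P :: "real^'n \<Rightarrow> real^'m" where "P y = (\<chi> j. y $ \<sigma> j)"

lemma P_nth [simp]: "P y $ j = y $ \<sigma> j" by (simp add: P_def)

lemma P_diff: "P (a - b) = P a - P b" by (simp add: vec_eq_iff)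

lemma P_inner: "P a \<bullet> P b = a \<bullet> b"
proof -
  have "P a \<bullet> P b = (\<Sum>j\<in>UNIV. a $ \<sigma> j * b $ \<sigma> j)" by (simp add: inner_vec_def)
  also have "\<dots> = (\<Sum>i\<in>UNIV. a $ i * b $ i)"
    using bij by (rule sum.reindex_bij_betw[of \<sigma> UNIV UNIV "\<lambda>i. a $ i * b $ i"])
  also have "\<dots> = a \<bullet> b" by (simp add: inner_vec_def)
  finally show ?thesis .
qed

lemma P_dist: "dist (P a) (P b) = dist a b"
  by (simp add: dist_norm norm_eq_sqrt_inner P_diff[symmetric] P_inner)

lemma P_linear: "linear P"
  by (rule linearI) (simp_all add: vec_eq_iff)

lemma P_meas: "P \<in> borel_measurable borel"
  by (intro borel_measurable_continuous_onI linear_continuous_on linear_conv_bounded_linear[THEN iffD1] P_linear)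

lemma distr_P: "distr lborel borel P = lborel"
proof (rule lborel_eqI[symmetric])
  fix l u :: "real^'m"
  assume le: "\<And>b. b \<in> Basis \<Longrightarrow> l \<bullet> b \<le> u \<bullet> b"
  define l' where "l' = (\<chi> i. l $ inv \<sigma> i)"
  define u' where "u' = (\<chi> i. u $ inv \<sigma> i)"
  have si: "\<sigma> (inv \<sigma> i) = i" for i using bij by (simp add: bij_is_surj surj_f_inv_f)
  have is': "inv \<sigma> (\<sigma> j) = j" for j using bij by (simp add: bij_is_inj inv_f_f)
  have pre: "P -` box l u \<inter> space lborel = box l' u'"
  proof -
    have "(\<forall>j. l $ j < y $ \<sigma> j \<and> y $ \<sigma> j < u $ j) = (\<forall>i. l $ inv \<sigma> i < y $ i \<and> y $ i < u $ inv \<sigma> i)" for y :: "real^'n"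
      by (metis is' si)
    then show ?thesis by (auto simp: mem_box_cart l'_def u'_def)
  qed
  have le': "l $ j \<le> u $ j" for j using le[of "axis j 1"] by (simp add: cart_eq_inner_axis axis_in_Basis_iff)
  have le2: "\<forall>b\<in>Basis. l' \<bullet> b \<le> u' \<bullet> b"
    by (auto simp: Basis_vec_def l'_def u'_def cart_eq_inner_axis[symmetric] le')
  have "(\<Prod>b\<in>Basis. (u' - l') \<bullet> b) = (\<Prod>i\<in>UNIV. u $ inv \<sigma> i - l $ inv \<sigma> i)"
    by (simp add: prod_Basis_cart l'_def u'_def)
  also have "\<dots> = (\<Prod>j\<in>UNIV. u $ j - l $ j)"
    using bij_betw_inv_into[OF bij] by (rule prod.reindex_bij_betw[of "inv \<sigma>" UNIV UNIV "\<lambda>j. u $ j - l $ j"])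
  also have "\<dots> = (\<Prod>b\<in>Basis. (u - l) \<bullet> b)" by (simp add: prod_Basis_cart)
  finally have pr: "(\<Prod>b\<in>Basis. (u' - l') \<bullet> b) = (\<Prod>b\<in>Basis. (u - l) \<bullet> b)" .
  have "emeasure (distr lborel borel P) (box l u) = emeasure lborel (P -` box l u \<inter> space lborel)"
    by (rule emeasure_distr) (use P_meas in auto)
  also have "\<dots> = ennreal (\<Prod>b\<in>Basis. (u - l) \<bullet> b)"
    unfolding pre emeasure_lborel_box_eq using le2 pr by simp
  finally show "emeasure (distr lborel borel P) (box l u) = ennreal (\<Prod>b\<in>Basis. (u - l) \<bullet> b)" .
qed simp

lemma emeasure_P: "X \<in> sets borel \<Longrightarrow> emeasure lborel X = emeasure lborel (P -` X)"
  using emeasure_distr[of P lborel borel X] P_meas distr_P by simp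

end

lemma slab_general:
  fixes x u :: "real^'n::finite"
  assumes dim: "3 \<le> CARD('n)" and u: "norm u = 1" and R: "0 \<le> R1" "R1 \<le> R2" and w: "0 \<le> w"
  shows "emeasure lborel {y. R1 < dist y x \<and> dist y x < R2 \<and> t \<le> (y - x) \<bullet> u \<and> (y - x) \<bullet> u \<le> t + w}
     \<le> ennreal (unit_ball_vol (real (CARD('n) - 1)) * real (CARD('n) - 1) * R2 ^ (CARD('n) - 3) * (R2\<^sup>2 - R1\<^sup>2) * w)"
proof -
  obtain \<sigma> :: "'n idx \<Rightarrow> 'n" where s: "bij_betw \<sigma> UNIV UNIV"
    using finite_same_card_bij[of "UNIV :: 'n idx set" "UNIV :: 'n set"] by (auto simp: card_idx)
  interpret perm_cart \<sigma> by standard (use s in simp)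
  let ?X = "{y. R1 < dist y (P x) \<and> dist y (P x) < R2 \<and> t \<le> (y - P x) \<bullet> P u \<and> (y - P x) \<bullet> P u \<le> t + w}"
  have uP: "norm (P u) = 1" using u by (simp add: norm_eq_sqrt_inner P_inner)
  have "P -` ?X = {y. R1 < dist y x \<and> dist y x < R2 \<and> t \<le> (y - x) \<bullet> u \<and> (y - x) \<bullet> u \<le> t + w}"
    by (auto simp: P_dist P_diff[symmetric] P_inner)
  moreover have "?X \<in> sets borel" by measurable
  ultimately have "emeasure lborel {y. R1 < dist y x \<and> dist y x < R2 \<and> t \<le> (y - x) \<bullet> u \<and> (y - x) \<bullet> u \<le> t + w} = emeasure lborel ?X"
    using emeasure_P by simp
  also have "\<dots> \<le> ennreal (unit_ball_vol (real (CARD('n) - 1)) * real (CARD('n) - 1) * R2 ^ (CARD('n) - 3) * (R2\<^sup>2 - R1\<^sup>2) * w)" using slab_wo[of "P u" R1 R2 w "P x" t] dim uP R w by (simp add: card_idx)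
  finally show ?thesis .
qed

definition shell :: "'a::metric_space \<Rightarrow> real \<Rightarrow> real \<Rightarrow> 'a set" where
  "shell x r \<delta> = {y. \<bar>dist y x - r\<bar> < \<delta>}"

definition KS :: "nat \<Rightarrow> real \<Rightarrow> real" where
  "KS n c = unit_ball_vol (real (n - 1)) * real (n - 1) * (c + 1) ^ (n - 3) * (4 * (c + 1))"

lemma KS_nonneg: "0 \<le> c \<Longrightarrow> 0 \<le> KS n c"
  by (simp add: KS_def)

lemma slab_general':
  fixes x u :: "real^'n::finite"
  assumes dim: "3 \<le> CARD('n)" and u: "norm u = 1" and R: "R1 \<le> R2" "0 \<le> R2" and w: "0 \<le> w"
  shows "emeasure lborel {y. R1 < dist y x \<and> dist y x < R2 \<and> t \<le> (y - x) \<bullet> u \<and> (y - x) \<bullet> u \<le> t + w}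
     \<le> ennreal (unit_ball_vol (real (CARD('n) - 1)) * real (CARD('n) - 1) * R2 ^ (CARD('n) - 3) * (R2\<^sup>2 - (max 0 R1)\<^sup>2) * w)"
proof (cases "0 \<le> R1")
  case True
  then show ?thesis using slab_general[OF dim u True R(1) w, where x=x and t=t] by simp
next
  case False
  let ?S = "\<lambda>R1. {y. R1 < dist y x \<and> dist y x < R2 \<and> t \<le> (y - x) \<bullet> u \<and> (y - x) \<bullet> u \<le> t + w}"
  have sub: "?S R1 \<subseteq> ?S 0 \<union> {x}" using False by auto
  have "emeasure lborel (?S R1) \<le> emeasure lborel (?S 0 \<union> {x})"
    by (intro emeasure_mono sub) measurable
  also have "\<dots> \<le> emeasure lborel (?S 0) + emeasure lborel {x}"
    by (intro emeasure_subadditive) measurable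
  also have "\<dots> = emeasure lborel (?S 0)" by simp
  also have "\<dots> \<le> ennreal (unit_ball_vol (real (CARD('n) - 1)) * real (CARD('n) - 1) * R2 ^ (CARD('n) - 3) * (R2\<^sup>2 - 0\<^sup>2) * w)"
    using slab_general[OF dim u order_refl R(2) w, where x=x and t=t] False by simp
  finally show ?thesis using False by simp
qed

lemma shell_slab:
  fixes x u :: "real^'n::finite"
  assumes dim: "3 \<le> CARD('n)" and u: "norm u = 1" and d: "0 < \<delta>" "\<delta> \<le> 1"
    and r: "0 \<le> r" "r \<le> c" and w: "0 \<le> w"
  shows "emeasure lborel (shell x r \<delta> \<inter> {y. t \<le> (y - x) \<bullet> u \<and> (y - x) \<bullet> u \<le> t + w})
     \<le> ennreal (KS CARD('n) c * \<delta> * w)"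
proof -
  let ?n = "CARD('n)"
  let ?om = "unit_ball_vol (real (?n - 1)) * real (?n - 1)"
  have om: "0 \<le> ?om" by simp
  have eq: "shell x r \<delta> \<inter> {y. t \<le> (y - x) \<bullet> u \<and> (y - x) \<bullet> u \<le> t + w}
      = {y. r - \<delta> < dist y x \<and> dist y x < r + \<delta> \<and> t \<le> (y - x) \<bullet> u \<and> (y - x) \<bullet> u \<le> t + w}"
    by (auto simp: shell_def abs_less_iff)
  have diff: "(r + \<delta>)\<^sup>2 - (max 0 (r - \<delta>))\<^sup>2 \<le> 4 * \<delta> * (c + 1)"
  proof (cases "r \<le> \<delta>")
    case True
    then have "(r + \<delta>)\<^sup>2 \<le> (2 * \<delta>)\<^sup>2" using r d by (intro power_mono) auto
    also have "\<dots> \<le> 4 * \<delta> * (c + 1)" using d r True by (simp add: power2_eq_square)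
    finally have "(r + \<delta>)\<^sup>2 \<le> 4 * \<delta> * (c + 1)" .
    then show ?thesis using zero_le_power2[of "max 0 (r - \<delta>)"] by linarith
  next
    case False
    then have "(r + \<delta>)\<^sup>2 - (max 0 (r - \<delta>))\<^sup>2 = 4 * r * \<delta>"
      by (simp add: max_def power2_eq_square algebra_simps)
    also have "\<dots> \<le> 4 * \<delta> * (c + 1)" using d r by (simp add: mult_left_mono)
    finally show ?thesis .
  qed
  have "emeasure lborel (shell x r \<delta> \<inter> {y. t \<le> (y - x) \<bullet> u \<and> (y - x) \<bullet> u \<le> t + w})
      \<le> ennreal (?om * (r + \<delta>) ^ (?n - 3) * ((r + \<delta>)\<^sup>2 - (max 0 (r - \<delta>))\<^sup>2) * w)"
    unfolding eq using slab_general'[OF dim u _ _ w, of "r - \<delta>" "r + \<delta>" x t] r d by simp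
  also have "\<dots> \<le> ennreal (?om * (c + 1) ^ (?n - 3) * (4 * \<delta> * (c + 1)) * w)"
  proof (intro ennreal_leI mult_right_mono mult_mono mult_left_mono power_mono diff w om)
    show "0 \<le> (r + \<delta>)\<^sup>2 - (max 0 (r - \<delta>))\<^sup>2" using r d by (intro diff_ge_0_iff_ge[THEN iffD2] power_mono) auto
  qed (use r d in auto)
  also have "?om * (c + 1) ^ (?n - 3) * (4 * \<delta> * (c + 1)) * w = KS ?n c * \<delta> * w"
    by (simp add: KS_def algebra_simps)
  finally show ?thesis .
qed

lemma diff_sq_bound:
  fixes \<delta> r c :: real
  assumes "0 < \<delta>" "0 \<le> r" "r \<le> c" "\<delta> \<le> 1"
  shows "(r + \<delta>)\<^sup>2 - (max 0 (r - \<delta>))\<^sup>2 \<le> 4 * \<delta> * (c + 1)"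
proof (cases "r \<le> \<delta>")
  case True
  then have "(r + \<delta>)\<^sup>2 \<le> (2 * \<delta>)\<^sup>2" using assms by (intro power_mono) auto
  also have "\<dots> \<le> 4 * \<delta> * (c + 1)" using assms True by (simp add: power2_eq_square)
  finally have "(r + \<delta>)\<^sup>2 \<le> 4 * \<delta> * (c + 1)" .
  then show ?thesis using zero_le_power2[of "max 0 (r - \<delta>)"] by linarith
next
  case False
  then have "(r + \<delta>)\<^sup>2 - (max 0 (r - \<delta>))\<^sup>2 = 4 * r * \<delta>"
    by (simp add: max_def power2_eq_square algebra_simps)
  also have "\<dots> \<le> 4 * \<delta> * (c + 1)" using assms by (simp add: mult_left_mono)
  finally show ?thesis .
qed

lemma shell_sq:
  assumes "y \<in> shell x r \<delta>"
  shows "(max 0 (r - \<delta>))\<^sup>2 \<le> (dist y x)\<^sup>2" "(dist y x)\<^sup>2 \<le> (r + \<delta>)\<^sup>2"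
  using assms by (auto simp: shell_def abs_less_iff intro!: power_mono)

lemma pair_bound:
  fixes x1 x2 :: "real^'n::finite"
  assumes dim: "3 \<le> CARD('n)" and d: "0 < \<delta>" "\<delta> \<le> 1"
    and r: "0 \<le> r1" "r1 \<le> c" "0 \<le> r2" "r2 \<le> c"
  shows "emeasure lborel (shell x1 r1 \<delta> \<inter> shell x2 r2 \<delta>)
     \<le> ennreal (4 * (c + 1) * KS CARD('n) c * \<delta>\<^sup>2 / max (dist x1 x2) \<delta>)"
proof -
  let ?K = "KS CARD('n) c"
  have c: "0 \<le> c" using r by simp
  have K: "0 \<le> ?K" using c by (rule KS_nonneg)
  have ms: "shell x r \<delta> \<in> sets lborel" for x :: "real^'n" and r unfolding shell_def by measurable
  show ?thesis
  proof (cases "dist x1 x2 \<le> \<delta>")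
    case True
    obtain i :: 'n where True by metis
    let ?u = "axis i (1::real)"
    have u: "norm ?u = 1" by simp
    have sub: "shell x1 r1 \<delta> \<inter> shell x2 r2 \<delta> \<subseteq> shell x1 r1 \<delta> \<inter> {y. - (c + 1) \<le> (y - x1) \<bullet> ?u \<and> (y - x1) \<bullet> ?u \<le> - (c + 1) + 2 * (c + 1)}"
    proof (intro subsetI)
      fix y assume y: "y \<in> shell x1 r1 \<delta> \<inter> shell x2 r2 \<delta>"
      have "\<bar>(y - x1) \<bullet> ?u\<bar> \<le> norm (y - x1) * norm ?u" by (rule Cauchy_Schwarz_ineq2)
      also have "\<dots> = dist y x1" by (simp add: dist_norm)
      also have "\<dots> < r1 + \<delta>" using y by (auto simp: shell_def abs_less_iff)
      finally show "y \<in> shell x1 r1 \<delta> \<inter> {y. - (c + 1) \<le> (y - x1) \<bullet> ?u \<and> (y - x1) \<bullet> ?u \<le> - (c + 1) + 2 * (c + 1)}"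
        using r d y by auto
    qed
    have "emeasure lborel (shell x1 r1 \<delta> \<inter> shell x2 r2 \<delta>) \<le> emeasure lborel (shell x1 r1 \<delta> \<inter> {y. - (c + 1) \<le> (y - x1) \<bullet> ?u \<and> (y - x1) \<bullet> ?u \<le> - (c + 1) + 2 * (c + 1)})"
      by (intro emeasure_mono sub) (intro sets.Int ms, measurable)
    also have "\<dots> \<le> ennreal (?K * \<delta> * (2 * (c + 1)))"
      by (rule shell_slab[OF dim u d r(1,2)]) (use c in simp)
    also have "\<dots> \<le> ennreal (4 * (c + 1) * ?K * \<delta>\<^sup>2 / max (dist x1 x2) \<delta>)"
    proof (intro ennreal_leI)
      have "max (dist x1 x2) \<delta> = \<delta>" using True by simp
      then show "?K * \<delta> * (2 * (c + 1)) \<le> 4 * (c + 1) * ?K * \<delta>\<^sup>2 / max (dist x1 x2) \<delta>"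
        using d c K by (simp add: power2_eq_square field_simps mult_right_mono)
    qed
    finally show ?thesis .
  next
    case False
    define dd where "dd = dist x1 x2"
    have dd: "0 < dd" "\<delta> < dd" using False d unfolding dd_def by auto
    define e where "e = x2 - x1"
    have ne: "norm e = dd" by (simp add: e_def dd_def dist_norm norm_minus_commute)
    define u where "u = e /\<^sub>R dd"
    have u: "norm u = 1" using dd ne by (simp add: u_def)
    define L1 where "L1 = (max 0 (r1 - \<delta>))\<^sup>2"
    define U1 where "U1 = (r1 + \<delta>)\<^sup>2"
    define L2 where "L2 = (max 0 (r2 - \<delta>))\<^sup>2"
    define U2 where "U2 = (r2 + \<delta>)\<^sup>2"
    define t where "t = (L1 + dd\<^sup>2 - U2) / (2 * dd)"
    define w where "w = (U1 - L1 + U2 - L2) / (2 * dd)"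
    have LU: "U1 - L1 \<le> 4 * \<delta> * (c + 1)" "U2 - L2 \<le> 4 * \<delta> * (c + 1)"
      unfolding L1_def U1_def L2_def U2_def using diff_sq_bound d r by auto
    have LU0: "L1 \<le> U1" "L2 \<le> U2" unfolding L1_def U1_def L2_def U2_def using d r
      by (auto intro!: power_mono)
    have w0: "0 \<le> w" using LU0 dd by (simp add: w_def)
    have sub: "shell x1 r1 \<delta> \<inter> shell x2 r2 \<delta> \<subseteq> shell x1 r1 \<delta> \<inter> {y. t \<le> (y - x1) \<bullet> u \<and> (y - x1) \<bullet> u \<le> t + w}"
    proof (intro subsetI)
      fix y assume y: "y \<in> shell x1 r1 \<delta> \<inter> shell x2 r2 \<delta>"
      define v where "v = y - x1"
      have a: "L1 \<le> (norm v)\<^sup>2" "(norm v)\<^sup>2 \<le> U1"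
        using shell_sq[of y x1 r1 \<delta>] y by (auto simp: L1_def U1_def v_def dist_norm)
      have b: "L2 \<le> (norm (v - e))\<^sup>2" "(norm (v - e))\<^sup>2 \<le> U2"
        using shell_sq[of y x2 r2 \<delta>] y by (auto simp: L2_def U2_def v_def e_def dist_norm)
      have ee: "e \<bullet> e = dd\<^sup>2" using ne by (simp add: power2_norm_eq_inner[symmetric])
      have id: "(norm (v - e))\<^sup>2 = (norm v)\<^sup>2 - 2 * (v \<bullet> e) + dd\<^sup>2"
        using ee by (simp add: power2_norm_eq_inner inner_diff_left inner_diff_right inner_commute)
      have vu: "v \<bullet> u = ((norm v)\<^sup>2 + dd\<^sup>2 - (norm (v - e))\<^sup>2) / (2 * dd)"
        using dd id by (simp add: u_def field_simps)
      have "t \<le> v \<bullet> u" unfolding vu t_def using dd a b by (intro divide_right_mono) auto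
      moreover have "v \<bullet> u \<le> t + w" unfolding vu t_def w_def using dd a b
        by (simp add: add_divide_distrib[symmetric] divide_right_mono)
      ultimately show "y \<in> shell x1 r1 \<delta> \<inter> {y. t \<le> (y - x1) \<bullet> u \<and> (y - x1) \<bullet> u \<le> t + w}" using y by (simp add: v_def)
    qed
    have "emeasure lborel (shell x1 r1 \<delta> \<inter> shell x2 r2 \<delta>) \<le> emeasure lborel (shell x1 r1 \<delta> \<inter> {y. t \<le> (y - x1) \<bullet> u \<and> (y - x1) \<bullet> u \<le> t + w})"
      by (intro emeasure_mono sub) (intro sets.Int ms, measurable)
    also have "\<dots> \<le> ennreal (?K * \<delta> * w)"
      by (rule shell_slab[OF dim u d r(1,2) w0])
    also have "\<dots> \<le> ennreal (4 * (c + 1) * ?K * \<delta>\<^sup>2 / max (dist x1 x2) \<delta>)"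
    proof (intro ennreal_leI)
      have m: "max (dist x1 x2) \<delta> = dd" using dd by (simp add: dd_def)
      have "U1 - L1 + U2 - L2 \<le> 2 * (4 * \<delta> * (c + 1))" using LU by linarith
      then have "w \<le> 2 * (4 * \<delta> * (c + 1)) / (2 * dd)"
        unfolding w_def using dd by (intro divide_right_mono) auto
      then have "w \<le> 4 * \<delta> * (c + 1) / dd" by simp
      then have "?K * \<delta> * w \<le> ?K * \<delta> * (4 * \<delta> * (c + 1) / dd)"
        using K d by (intro mult_left_mono) auto
      also have "\<dots> = 4 * (c + 1) * ?K * \<delta>\<^sup>2 / max (dist x1 x2) \<delta>"
        by (simp add: m power2_eq_square)
      finally show "?K * \<delta> * w \<le> \<dots>" .
    qed
    finally show ?thesis .
  qed
qed

lemma dyadic_exists: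
  fixes D \<delta> :: real
  assumes "0 < \<delta>" "\<delta> \<le> D" "D < 2 ^ N * \<delta>"
  shows "\<exists>k<N. 2 ^ k * \<delta> \<le> D \<and> D < 2 ^ Suc k * \<delta>"
  using assms
proof (induction N)
  case 0 then show ?case by simp
next
  case (Suc N)
  show ?case
  proof (cases "D < 2 ^ N * \<delta>")
    case True
    then obtain k where "k < N" "2 ^ k * \<delta> \<le> D \<and> D < 2 ^ Suc k * \<delta>" using Suc by auto
    then show ?thesis by (intro exI[of _ k]) auto
  next
    case False
    then show ?thesis using Suc.prems by (intro exI[of _ N]) auto
  qed
qed

lemma count_sum_N:
  fixes q :: "nat \<Rightarrow> 'b::metric_space" and p :: 'b
  assumes I: "finite I" and d: "0 < \<delta>" and N: "R0 \<le> 2 ^ N * \<delta>" and A: "0 \<le> A"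
    and hyp: "\<And>\<rho>. \<rho> \<ge> \<delta> \<Longrightarrow> real (card {j\<in>I. q j \<in> ball p \<rho>}) \<le> A * \<rho>"
  shows "(\<Sum>j\<in>I. if dist p (q j) < R0 then 1 / max (dist p (q j)) \<delta> else 0) \<le> A * (1 + 2 * real N)"
proof -
  let ?D = "\<lambda>j. dist p (q j)"
  let ?S = "\<lambda>k j. if 2 ^ k * \<delta> \<le> ?D j \<and> ?D j < 2 ^ Suc k * \<delta> then 1 / (2 ^ k * \<delta>) else (0::real)"
  let ?Z = "\<lambda>j. if ?D j < \<delta> then 1 / \<delta> else (0::real)"
  have pt: "(if ?D j < R0 then 1 / max (?D j) \<delta> else 0) \<le> ?Z j + (\<Sum>k<N. ?S k j)" for j
  proof -
    have S0: "0 \<le> (\<Sum>k<N. ?S k j)" using d by (intro sum_nonneg) auto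
    show ?thesis
    proof (cases "?D j < \<delta>")
      case True
      then show ?thesis using S0 d by auto
    next
      case F: False
      show ?thesis
      proof (cases "?D j < R0")
        case True
        then obtain k where k: "k < N" "2 ^ k * \<delta> \<le> ?D j" "?D j < 2 ^ Suc k * \<delta>"
          using dyadic_exists[of \<delta> "?D j" N] F d N by auto
        have "1 / max (?D j) \<delta> = 1 / ?D j" using F by simp
        also have "\<dots> \<le> 1 / (2 ^ k * \<delta>)"
        proof (rule divide_left_mono)
          have "0 < 2 ^ k * \<delta>" using d by simp
          moreover have "0 < ?D j" using k(2) \<open>0 < 2 ^ k * \<delta>\<close> by linarith
          ultimately show "0 < ?D j * (2 ^ k * \<delta>)" by (metis mult_pos_pos)
        qed (use k in auto)
        also have "\<dots> = ?S k j" using k by simp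
        also have "\<dots> \<le> (\<Sum>k<N. ?S k j)"
          using k d by (intro member_le_sum) auto
        finally show ?thesis using True F by simp
      next
        case False
        then show ?thesis using F S0 by simp
      qed
    qed
  qed
  have cZ: "(\<Sum>j\<in>I. ?Z j) \<le> A"
  proof -
    have "(\<Sum>j\<in>I. ?Z j) = real (card {j\<in>I. ?D j < \<delta>}) * (1 / \<delta>)"
      using I by (simp add: sum.inter_filter[symmetric])
    also have "\<dots> \<le> A * \<delta> * (1 / \<delta>)"
      using hyp[of \<delta>] d by (intro mult_right_mono) (auto simp: ball_def)
    also have "\<dots> = A" using d by simp
    finally show ?thesis .
  qed
  have cS: "(\<Sum>j\<in>I. ?S k j) \<le> 2 * A" for k
  proof -
    have "(\<Sum>j\<in>I. ?S k j) = real (card {j\<in>I. 2 ^ k * \<delta> \<le> ?D j \<and> ?D j < 2 ^ Suc k * \<delta>}) * (1 / (2 ^ k * \<delta>))"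
      using I by (simp add: sum.inter_filter[symmetric])
    also have "\<dots> \<le> real (card {j\<in>I. q j \<in> ball p (2 ^ Suc k * \<delta>)}) * (1 / (2 ^ k * \<delta>))"
      using I d by (intro mult_right_mono of_nat_mono card_mono) (auto simp: ball_def)
    also have "\<dots> \<le> A * (2 ^ Suc k * \<delta>) * (1 / (2 ^ k * \<delta>))"
    proof (intro mult_right_mono hyp)
      have "(1::real) \<le> 2 ^ Suc k" by (rule one_le_power) simp
      then have "1 * \<delta> \<le> 2 ^ Suc k * \<delta>" using d by (intro mult_right_mono) auto
      then show "\<delta> \<le> 2 ^ Suc k * \<delta>" by simp
    qed (use d in auto)
    also have "\<dots> = 2 * A" using d by (simp add: field_simps)
    finally show ?thesis .
  qed
  have "(\<Sum>j\<in>I. if ?D j < R0 then 1 / max (?D j) \<delta> else 0) \<le> (\<Sum>j\<in>I. ?Z j + (\<Sum>k<N. ?S k j))"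
    by (intro sum_mono pt)
  also have "\<dots> = (\<Sum>j\<in>I. ?Z j) + (\<Sum>k<N. \<Sum>j\<in>I. ?S k j)"
    by (simp add: sum.distrib sum.swap[of _ I])
  also have "\<dots> \<le> A + (\<Sum>k<N. 2 * A)"
    by (intro add_mono cZ sum_mono cS)
  also have "\<dots> = A * (1 + 2 * real N)" by (simp add: algebra_simps)
  finally show ?thesis .
qed

lemma count_sum_log:
  fixes q :: "nat \<Rightarrow> 'b::metric_space" and p :: 'b
  assumes I: "finite I" and d: "0 < \<delta>" "\<delta> < 1/2" and R0: "1 \<le> R0" and A: "0 \<le> A"
    and hyp: "\<And>\<rho>. \<rho> \<ge> \<delta> \<Longrightarrow> real (card {j\<in>I. q j \<in> ball p \<rho>}) \<le> A * \<rho>"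
  shows "(\<Sum>j\<in>I. if dist p (q j) < R0 then 1 / max (dist p (q j)) \<delta> else 0)
     \<le> A * ((5 + 2 * (ln R0 / ln 2)) / ln 2) * ln (1 / \<delta>)"
proof -
  define lg where "lg = log 2 (R0 / \<delta>)"
  define N where "N = nat \<lceil>lg\<rceil>"
  have Rd: "1 < R0 / \<delta>" using d R0 by (simp add: field_simps)
  have lg0: "0 < lg" unfolding lg_def using Rd by simp
  have N1: "lg \<le> real N" unfolding N_def using lg0 by linarith
  have N2: "real N \<le> lg + 1" unfolding N_def using lg0 by linarith
  have "R0 / \<delta> = 2 powr lg" unfolding lg_def using Rd by simp
  also have "\<dots> \<le> 2 powr real N" using N1 by (intro powr_mono) auto
  also have "\<dots> = 2 ^ N" by (simp add: powr_realpow)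
  finally have "R0 \<le> 2 ^ N * \<delta>" using d by (simp add: field_simps)
  then have c: "(\<Sum>j\<in>I. if dist p (q j) < R0 then 1 / max (dist p (q j)) \<delta> else 0) \<le> A * (1 + 2 * real N)"
    by (rule count_sum_N[OF I d(1) _ A hyp])
  define y where "y = ln (1 / \<delta>) / ln 2"
  define l where "l = ln R0 / ln 2"
  have l0: "0 \<le> l" unfolding l_def using R0 by simp
  have y1: "1 \<le> y"
  proof -
    have "ln 2 \<le> ln (1 / \<delta>)" using d by (subst ln_le_cancel_iff) (auto simp: field_simps)
    then show ?thesis unfolding y_def by simp
  qed
  have lgeq: "lg = l + y"
    unfolding lg_def l_def y_def log_def using d R0
    by (simp add: ln_div ln_mult add_divide_distrib[symmetric] algebra_simps)
  have "1 + 2 * real N \<le> (5 + 2 * l) * y"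
  proof -
    have "1 + 2 * real N \<le> 3 + 2 * l + 2 * y" using N2 lgeq by simp
    also have "\<dots> \<le> 3 * y + 2 * l * y + 2 * y" using y1 l0
      by (intro add_mono) (auto simp: mult_left_mono mult_le_cancel_left1)
    also have "\<dots> = (5 + 2 * l) * y" by (simp add: algebra_simps)
    finally show ?thesis .
  qed
  then have "A * (1 + 2 * real N) \<le> A * ((5 + 2 * l) * y)" using A by (rule mult_left_mono)
  also have "\<dots> = A * ((5 + 2 * (ln R0 / ln 2)) / ln 2) * ln (1 / \<delta>)"
    by (simp add: l_def y_def)
  finally show ?thesis using c by linarith
qed

lemma measure_le_of_emeasure:
  assumes "emeasure M X \<le> ennreal b" "0 \<le> b"
  shows "measure M X \<le> b"
proof -
  have "measure M X = enn2real (emeasure M X)" by (simp add: measure_def)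
  also have "\<dots> \<le> enn2real (ennreal b)" by (rule enn2real_mono[OF assms(1)]) simp
  also have "\<dots> = b" using assms(2) by simp
  finally show ?thesis .
qed

lemma nbhd_sub_shell: "nbhd (sphere x r) \<delta> \<subseteq> shell x r \<delta>"
proof
  fix y assume "y \<in> nbhd (sphere x r) \<delta>"
  then obtain z where z: "dist x z = r" "dist y z < \<delta>" by (auto simp: nbhd_def)
  have "\<bar>dist y x - dist z x\<bar> \<le> dist y z"
    using dist_triangle[of y x z] dist_triangle[of z x y] by (simp add: dist_commute abs_le_iff)
  then show "y \<in> shell x r \<delta>" using z by (simp add: shell_def dist_commute)
qed

lemma nbhd_open: "open (nbhd S \<delta>)"
proof -
  have "nbhd S \<delta> = (\<Union>z\<in>S. ball z \<delta>)" by (auto simp: nbhd_def ball_def dist_commute)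
  then show ?thesis by auto
qed

lemma shell_sets: "shell (x::'a::euclidean_space) r \<delta> \<in> sets lborel"
  unfolding shell_def by measurable

lemma shell_fin: "emeasure lborel (shell (x::'a::euclidean_space) r \<delta> \<inter> B) < \<infinity>"
proof -
  have "bounded (shell x r \<delta> \<inter> B)"
    by (rule bounded_subset[of "cball x (\<bar>r\<bar> + \<bar>\<delta>\<bar>)"]) (auto simp: shell_def dist_commute)
  then show ?thesis by (rule emeasure_bounded_finite)
qed

lemma schur:
  fixes a :: "nat \<Rightarrow> real" and \<mu> :: "nat \<Rightarrow> nat \<Rightarrow> real"
  assumes sym: "\<And>i j. \<mu> i j = \<mu> j i" and nn: "\<And>i j. 0 \<le> \<mu> i j"
  shows "(\<Sum>i\<in>I. \<Sum>j\<in>I. a i * a j * \<mu> i j) \<le> (\<Sum>i\<in>I. (a i)\<^sup>2 * (\<Sum>j\<in>I. \<mu> i j))"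
proof -
  have "(\<Sum>i\<in>I. \<Sum>j\<in>I. a i * a j * \<mu> i j) \<le> (\<Sum>i\<in>I. \<Sum>j\<in>I. (a i)\<^sup>2 * \<mu> i j / 2 + (a j)\<^sup>2 * \<mu> i j / 2)"
  proof (intro sum_mono)
    fix i j
    have "0 \<le> (a i - a j)\<^sup>2" by simp
    then have "2 * (a i * a j) \<le> (a i)\<^sup>2 + (a j)\<^sup>2" by (simp add: power2_diff)
    then have "2 * (a i * a j) * \<mu> i j \<le> ((a i)\<^sup>2 + (a j)\<^sup>2) * \<mu> i j" using nn by (intro mult_right_mono) auto
    then show "a i * a j * \<mu> i j \<le> (a i)\<^sup>2 * \<mu> i j / 2 + (a j)\<^sup>2 * \<mu> i j / 2"
      by (simp add: algebra_simps)
  qed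
  also have "\<dots> = (\<Sum>i\<in>I. \<Sum>j\<in>I. (a i)\<^sup>2 * \<mu> i j / 2) + (\<Sum>i\<in>I. \<Sum>j\<in>I. (a j)\<^sup>2 * \<mu> i j / 2)"
    by (simp add: sum.distrib)
  also have "(\<Sum>i\<in>I. \<Sum>j\<in>I. (a j)\<^sup>2 * \<mu> i j / 2) = (\<Sum>j\<in>I. \<Sum>i\<in>I. (a j)\<^sup>2 * \<mu> j i / 2)"
    by (subst sum.swap) (simp add: sym)
  also have "(\<Sum>i\<in>I. \<Sum>j\<in>I. (a i)\<^sup>2 * \<mu> i j / 2) + (\<Sum>j\<in>I. \<Sum>i\<in>I. (a j)\<^sup>2 * \<mu> j i / 2)
      = 2 * (\<Sum>i\<in>I. \<Sum>j\<in>I. (a i)\<^sup>2 * \<mu> i j / 2)"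
    by (simp only: mult_2)
  also have "\<dots> = (\<Sum>i\<in>I. (a i)\<^sup>2 * (\<Sum>j\<in>I. \<mu> i j))"
    by (simp add: sum_distrib_left)
  finally show ?thesis .
qed

lemma L2_expand:
  fixes E F :: "nat \<Rightarrow> 'a::euclidean_space set" and a :: "nat \<Rightarrow> real"
  assumes I: "finite I" and a: "\<And>i. i \<in> I \<Longrightarrow> 0 \<le> a i" and EF: "\<And>i. E i \<subseteq> F i"
    and Es: "\<And>i. E i \<in> sets lborel" and Fs: "\<And>i. F i \<in> sets lborel"
    and Ff: "\<And>i j. emeasure lborel (F i \<inter> F j) < \<infinity>"
  shows "(\<integral>y. (\<Sum>i\<in>I. a i * indicator (E i) y)\<^sup>2 \<partial>lborel)
     \<le> (\<Sum>i\<in>I. \<Sum>j\<in>I. a i * a j * measure lborel (F i \<inter> F j))"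
proof -
  let ?f = "\<lambda>y. (\<Sum>i\<in>I. a i * indicator (E i) y)\<^sup>2"
  let ?g = "\<lambda>y. (\<Sum>i\<in>I. a i * indicator (F i) y)\<^sup>2"
  have geq: "?g y = (\<Sum>i\<in>I. \<Sum>j\<in>I. a i * a j * indicator (F i \<inter> F j) y)" for y
    by (simp add: power2_eq_square sum_product indicator_inter_arith algebra_simps)
  have FFs: "F i \<inter> F j \<in> sets lborel" for i j using Fs by auto
  have int1: "integrable lborel (\<lambda>y. a i * a j * indicator (F i \<inter> F j) y)" for i j
    by (intro integrable_mult_right integrable_real_indicator FFs Ff)
  have int2: "integrable lborel (\<lambda>y. \<Sum>j\<in>I. a i * a j * indicator (F i \<inter> F j) y)" for i
    using int1 by auto
  have gint: "integrable lborel ?g"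
    unfolding geq using int2 by auto
  have val1: "integral\<^sup>L lborel (\<lambda>y. a i * a j * indicator (F i \<inter> F j) y) = a i * a j * measure lborel (F i \<inter> F j)" for i j
    using has_bochner_integral_integral_eq[OF has_bochner_integral_real_indicator[OF FFs Ff]] by simp
  have val2: "integral\<^sup>L lborel (\<lambda>y. \<Sum>j\<in>I. a i * a j * indicator (F i \<inter> F j) y) = (\<Sum>j\<in>I. a i * a j * measure lborel (F i \<inter> F j))" for i
    using Bochner_Integration.integral_sum[where I=I and M=lborel and f="\<lambda>j y. a i * a j * indicator (F i \<inter> F j) y"] int1 val1 by simp
  have gval: "integral\<^sup>L lborel ?g = (\<Sum>i\<in>I. \<Sum>j\<in>I. a i * a j * measure lborel (F i \<inter> F j))"
    unfolding geq using Bochner_Integration.integral_sum[where I=I and M=lborel and f="\<lambda>i y. \<Sum>j\<in>I. a i * a j * indicator (F i \<inter> F j) y"] int2 val2 by simp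
  have le: "0 \<le> (\<Sum>i\<in>I. a i * indicator (E i) y) \<and> (\<Sum>i\<in>I. a i * indicator (E i) y) \<le> (\<Sum>i\<in>I. a i * indicator (F i) y)" for y
  proof
    show "0 \<le> (\<Sum>i\<in>I. a i * indicator (E i) y)" using a by (intro sum_nonneg) auto
    show "(\<Sum>i\<in>I. a i * indicator (E i) y) \<le> (\<Sum>i\<in>I. a i * indicator (F i) y)"
      using a EF by (intro sum_mono mult_left_mono) (auto simp: indicator_def)
  qed
  have fle: "?f y \<le> ?g y" for y using le[of y] by (intro power_mono) auto
  have fmeas: "?f \<in> borel_measurable lborel" using Es by measurable
  have fint: "integrable lborel ?f"
    by (rule Bochner_Integration.integrable_bound[OF gint fmeas]) (use fle in auto)
  have "integral\<^sup>L lborel ?f \<le> integral\<^sup>L lborel ?g"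
    by (intro Bochner_Integration.integral_mono fint gint fle)
  then show ?thesis using gval by simp
qed

lemma mu_bound:
  fixes x1 x2 :: "real^'n::finite"
  assumes dim: "3 \<le> CARD('n)" and d: "0 < \<delta>" "\<delta> < 1/2" and c: "0 \<le> c"
    and r: "0 \<le> r1" "r1 \<le> c" "0 \<le> r2" "r2 \<le> c"
  shows "measure lborel (shell x1 r1 \<delta> \<inter> shell x2 r2 \<delta>)
    \<le> 4 * (4 * (c + 1) * KS CARD('n) c) * \<delta>\<^sup>2 *
       (if dist (x1, r1) (x2, r2) < 4 * c + 3 then 1 / max (dist (x1, r1) (x2, r2)) \<delta> else 0)"
proof -
  let ?KP = "4 * (c + 1) * KS CARD('n) c"
  let ?D = "dist (x1, r1) (x2, r2)"
  let ?d = "dist x1 x2"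
  have KP: "0 \<le> ?KP" using c KS_nonneg[OF c] by simp
  have h0: "0 \<le> (if ?D < 4 * c + 3 then 1 / max ?D \<delta> else 0)" using d by auto
  show ?thesis
  proof (cases "shell x1 r1 \<delta> \<inter> shell x2 r2 \<delta> = {}")
    case True
    then show ?thesis using KP h0 by simp
  next
    case False
    then obtain y where y1: "\<bar>dist y x1 - r1\<bar> < \<delta>" and y2: "\<bar>dist y x2 - r2\<bar> < \<delta>"
      by (auto simp: shell_def)
    have tri: "?d \<le> dist y x1 + dist y x2" using dist_triangle[of x1 x2 y] by (simp add: dist_commute)
    have tri1: "dist y x1 \<le> dist y x2 + ?d" using dist_triangle[of y x1 x2] by (simp add: dist_commute)
    have tri2: "dist y x2 \<le> dist y x1 + ?d" using dist_triangle[of y x2 x1] by (simp add: dist_commute)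
    have dr: "\<bar>r1 - r2\<bar> < ?d + 2 * \<delta>" using y1 y2 tri1 tri2 by (auto simp: abs_less_iff)
    have dd: "?d < 2 * c + 2 * \<delta>" using y1 y2 tri r by (auto simp: abs_less_iff)
    have "?D = sqrt (?d\<^sup>2 + (dist r1 r2)\<^sup>2)" by (rule dist_Pair_Pair)
    also have "\<dots> \<le> ?d + dist r1 r2" by (rule sqrt_sum_squares_le_sum) auto
    finally have Dle: "?D < 2 * ?d + 2 * \<delta>" using dr by (simp add: dist_real_def)
    have D0: "?D < 4 * c + 3" using Dle dd d by linarith
    have mx: "max ?D \<delta> \<le> 4 * max ?d \<delta>" using Dle d by auto
    have inv: "1 / max ?d \<delta> \<le> 4 * (1 / max ?D \<delta>)"
    proof -
      have "4 / (4 * max ?d \<delta>) \<le> 4 / max ?D \<delta>"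
        using mx d by (intro divide_left_mono) (auto intro!: mult_pos_pos)
      then show ?thesis by simp
    qed
    have "measure lborel (shell x1 r1 \<delta> \<inter> shell x2 r2 \<delta>) \<le> ?KP * \<delta>\<^sup>2 / max ?d \<delta>"
      using pair_bound[OF dim d(1) _ r, of x1 x2] d KP
      by (intro measure_le_of_emeasure) (auto intro!: divide_nonneg_pos)
    also have "\<dots> = ?KP * \<delta>\<^sup>2 * (1 / max ?d \<delta>)" by simp
    also have "\<dots> \<le> ?KP * \<delta>\<^sup>2 * (4 * (1 / max ?D \<delta>))"
      using KP inv by (intro mult_left_mono) auto
    also have "\<dots> = 4 * ?KP * \<delta>\<^sup>2 * (if ?D < 4 * c + 3 then 1 / max ?D \<delta> else 0)"
      using D0 by simp
    finally show ?thesis .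
  qed
qed

theorem proposition3p4:
  fixes c :: real
  assumes "CARD('n::finite) \<ge> 3" and "c \<ge> 1"
  shows "\<exists>C>0. \<forall>(\<delta>::real) (A::real) (I::nat set) (x::nat \<Rightarrow> real^'n) (r::nat \<Rightarrow> real) (a::nat \<Rightarrow> real).
     0 < \<delta> \<and> \<delta> < 1/2 \<and> A > 0 \<and> finite I \<and>
     (\<forall>i\<in>I. 1/c \<le> r i \<and> r i \<le> c) \<and>
     (\<forall>(p::(real^'n) \<times> real) (\<rho>::real). \<rho> \<ge> \<delta> \<longrightarrow>
         real (card {i\<in>I. (x i, r i) \<in> ball p \<rho>}) \<le> A * \<rho>) \<and>
     (\<forall>i\<in>I. a i \<ge> 0)
     \<longrightarrow> sqrt (\<integral>y. (\<Sum>i\<in>I. a i * indicator (nbhd (sphere (x i) (r i)) \<delta>) y)^2 \<partial>lborel)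
         \<le> C * \<delta> * ln (1/\<delta>) * sqrt A * sqrt (\<Sum>i\<in>I. (a i)^2)"
proof -
  note dim = assms(1)
  have c0: "0 \<le> c" using assms(2) by simp
  define KP where "KP = 4 * (c + 1) * KS CARD('n) c"
  define R0 where "R0 = 4 * c + 3"
  define L where "L = (5 + 2 * (ln R0 / ln 2)) / ln 2"
  define C where "C = sqrt (4 * KP * L / ln 2) + 1"
  have KP: "0 \<le> KP" unfolding KP_def using c0 KS_nonneg[OF c0] by simp
  have R0: "1 \<le> R0" unfolding R0_def using c0 by simp
  have L: "0 \<le> L" unfolding L_def using R0 by simp
  have X: "0 \<le> 4 * KP * L / ln 2" using KP L by simp
  have C0: "0 < C" unfolding C_def using real_sqrt_ge_zero[OF X] by linarith
  have C2: "4 * KP * L / ln 2 \<le> C\<^sup>2"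
  proof -
    have "4 * KP * L / ln 2 = (sqrt (4 * KP * L / ln 2))\<^sup>2" using X by simp
    also have "\<dots> \<le> C\<^sup>2" unfolding C_def using X by (intro power_mono) auto
    finally show ?thesis .
  qed
  show ?thesis
  proof (intro exI[of _ C] conjI allI impI C0)
    fix \<delta> A :: real and I :: "nat set" and x :: "nat \<Rightarrow> real^'n" and r a :: "nat \<Rightarrow> real"
    assume H: "0 < \<delta> \<and> \<delta> < 1/2 \<and> A > 0 \<and> finite I \<and>
     (\<forall>i\<in>I. 1/c \<le> r i \<and> r i \<le> c) \<and>
     (\<forall>(p::(real^'n) \<times> real) (\<rho>::real). \<rho> \<ge> \<delta> \<longrightarrow>
         real (card {i\<in>I. (x i, r i) \<in> ball p \<rho>}) \<le> A * \<rho>) \<and>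
     (\<forall>i\<in>I. a i \<ge> 0)"
    then have d: "0 < \<delta>" "\<delta> < 1/2" and A: "0 < A" and I: "finite I"
      and r: "\<And>i. i \<in> I \<Longrightarrow> 1/c \<le> r i \<and> r i \<le> c"
      and cnt: "\<And>p \<rho>. \<rho> \<ge> \<delta> \<Longrightarrow> real (card {i\<in>I. (x i, r i) \<in> ball p \<rho>}) \<le> A * \<rho>"
      and a: "\<And>i. i \<in> I \<Longrightarrow> 0 \<le> a i"
      by auto
    have r0: "0 \<le> r i" if "i \<in> I" for i
      using r[OF that] c0 by (meson order.trans divide_nonneg_nonneg zero_le_one)
    define F where "F i = shell (x i) (r i) \<delta>" for i
    define \<mu> where "\<mu> i j = measure lborel (F i \<inter> F j)" for i j
    define h where "h i j = (if dist (x i, r i) (x j, r j) < R0 then 1 / max (dist (x i, r i) (x j, r j)) \<delta> else 0)" for i j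
    define S where "S = (\<Sum>i\<in>I. (a i)\<^sup>2)"
    define lnd where "lnd = ln (1 / \<delta>)"
    have S0: "0 \<le> S" unfolding S_def by (simp add: sum_nonneg)
    have lnd: "ln 2 \<le> lnd" unfolding lnd_def using d by (subst ln_le_cancel_iff) (auto simp: field_simps)
    have lnd0: "0 < lnd" using lnd by (smt (verit) ln_gt_zero one_less_numeral_iff semiring_norm(76))
    have step1: "(\<integral>y. (\<Sum>i\<in>I. a i * indicator (nbhd (sphere (x i) (r i)) \<delta>) y)^2 \<partial>lborel)
        \<le> (\<Sum>i\<in>I. \<Sum>j\<in>I. a i * a j * \<mu> i j)"
      unfolding \<mu>_def
    proof (rule L2_expand[OF I a])
      show "nbhd (sphere (x i) (r i)) \<delta> \<subseteq> F i" for i unfolding F_def by (rule nbhd_sub_shell)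
      show "nbhd (sphere (x i) (r i)) \<delta> \<in> sets lborel" for i using borel_open[OF nbhd_open] by simp
      show "F i \<in> sets lborel" for i unfolding F_def by (rule shell_sets)
      show "emeasure lborel (F i \<inter> F j) < \<infinity>" for i j unfolding F_def by (rule shell_fin)
    qed
    have step2: "(\<Sum>i\<in>I. \<Sum>j\<in>I. a i * a j * \<mu> i j) \<le> (\<Sum>i\<in>I. (a i)\<^sup>2 * (\<Sum>j\<in>I. \<mu> i j))"
      by (rule schur) (auto simp: \<mu>_def Int_commute)
    have step3: "(\<Sum>j\<in>I. \<mu> i j) \<le> 4 * KP * \<delta>\<^sup>2 * (A * L * lnd)" if i: "i \<in> I" for i
    proof -
      have "(\<Sum>j\<in>I. \<mu> i j) \<le> (\<Sum>j\<in>I. 4 * KP * \<delta>\<^sup>2 * h i j)"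
      proof (intro sum_mono)
        fix j assume j: "j \<in> I"
        show "\<mu> i j \<le> 4 * KP * \<delta>\<^sup>2 * h i j"
          unfolding \<mu>_def F_def h_def KP_def R0_def
          using mu_bound[OF dim d c0 r0[OF i] conjunct2[OF r[OF i]] r0[OF j] conjunct2[OF r[OF j]]]
          by simp
      qed
      also have "\<dots> = 4 * KP * \<delta>\<^sup>2 * (\<Sum>j\<in>I. h i j)" by (simp add: sum_distrib_left)
      also have "\<dots> \<le> 4 * KP * \<delta>\<^sup>2 * (A * L * lnd)"
      proof (intro mult_left_mono)
        show "(\<Sum>j\<in>I. h i j) \<le> A * L * lnd"
          unfolding h_def L_def lnd_def
          by (rule count_sum_log[OF I d R0 less_imp_le[OF A]]) (rule cnt)
      qed (use KP in simp)
      finally show ?thesis .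
    qed
    have step4: "(\<Sum>i\<in>I. (a i)\<^sup>2 * (\<Sum>j\<in>I. \<mu> i j)) \<le> (4 * KP * L / ln 2) * \<delta>\<^sup>2 * lnd\<^sup>2 * A * S"
    proof -
      have "(\<Sum>i\<in>I. (a i)\<^sup>2 * (\<Sum>j\<in>I. \<mu> i j)) \<le> (\<Sum>i\<in>I. (a i)\<^sup>2 * (4 * KP * \<delta>\<^sup>2 * (A * L * lnd)))"
        by (intro sum_mono mult_left_mono step3) auto
      also have "\<dots> = S * (4 * KP * \<delta>\<^sup>2 * (A * L * lnd))"
        by (simp only: S_def sum_distrib_right)
      also have "\<dots> = 4 * KP * \<delta>\<^sup>2 * A * L * lnd * S"
        by (simp add: algebra_simps)
      also have "\<dots> \<le> (4 * KP * L / ln 2) * \<delta>\<^sup>2 * lnd\<^sup>2 * A * S"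
      proof -
        have "lnd \<le> lnd\<^sup>2 / ln 2" using lnd lnd0 by (simp add: power2_eq_square field_simps mult_right_mono)
        then have "4 * KP * \<delta>\<^sup>2 * A * L * S * lnd \<le> 4 * KP * \<delta>\<^sup>2 * A * L * S * (lnd\<^sup>2 / ln 2)"
          using KP A L S0 by (intro mult_left_mono) auto
        then show ?thesis by (simp add: algebra_simps)
      qed
      finally show ?thesis .
    qed
    have step5: "(4 * KP * L / ln 2) * \<delta>\<^sup>2 * lnd\<^sup>2 * A * S \<le> (C * \<delta> * lnd * sqrt A * sqrt S)\<^sup>2"
    proof -
      have sA: "(sqrt A)\<^sup>2 = A" using A by simp
      have sS: "(sqrt S)\<^sup>2 = S" using S0 by simp
      have eq: "(C * \<delta> * lnd * sqrt A * sqrt S)\<^sup>2 = C\<^sup>2 * (\<delta>\<^sup>2 * lnd\<^sup>2 * A * S)"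
        by (simp only: power_mult_distrib sA sS mult.assoc)
      have le: "(4 * KP * L / ln 2) * (\<delta>\<^sup>2 * lnd\<^sup>2 * A * S) \<le> C\<^sup>2 * (\<delta>\<^sup>2 * lnd\<^sup>2 * A * S)"
        using C2 A S0 by (intro mult_right_mono) auto
      show ?thesis unfolding eq using le by (simp only: mult.assoc)
    qed
    have nn: "0 \<le> C * \<delta> * lnd * sqrt A * sqrt S" using C0 d lnd0 A S0 by simp
    have "sqrt (\<integral>y. (\<Sum>i\<in>I. a i * indicator (nbhd (sphere (x i) (r i)) \<delta>) y)^2 \<partial>lborel)
        \<le> sqrt ((C * \<delta> * lnd * sqrt A * sqrt S)\<^sup>2)"
      using step1 step2 step4 step5 by (intro real_sqrt_le_mono) linarith
    also have "\<dots> = C * \<delta> * lnd * sqrt A * sqrt S" using nn by simp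
    finally show "sqrt (\<integral>y. (\<Sum>i\<in>I. a i * indicator (nbhd (sphere (x i) (r i)) \<delta>) y)^2 \<partial>lborel)
         \<le> C * \<delta> * ln (1/\<delta>) * sqrt A * sqrt (\<Sum>i\<in>I. (a i)^2)"
      by (simp add: lnd_def S_def)
  qed
qed

end
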